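(* Let $f\in\mathcal R^0_{[1]}(\mathbb R^2)$ and $v\in\mathbb R^2$. Then the partial derivative $\partial_v f$ (a regular function on $\mathrm{dom}(f)$) is locally bounded at every point of $\mathrm{pol}(f)$: for each $a\in\mathrm{pol}(f)$ there is a neighbourhood $U$ of $a$ such that $\partial_v f$ is bounded on $U\cap\mathrm{dom}(f)$.
   Context: For $k\in\mathbb N\cup\{\infty\}$, $\mathcal R^k(\mathbb R^2)$ denotes the ring of functions $f:\mathbb R^2\to\mathbb R$ of class $C^k$ that coincide with $p/q$ ($p,q$ polynomials, $q$ nonvanishing there) on some nonempty Zariski open set; $\mathrm{dom}(f)$ is the largest Zariski open set on which the associated rational function is regular and $\mathrm{pol}(f)=\mathbb R^2\setminus\mathrm{dom}(f)$. For $l\in\mathbb N$: consider compositions $\pi:M\to\mathbb R^2$ of successive blowings-up $M_i\to M_{i-1}$ ($M_0=\mathbb R^2$), each centred at points. An infinitely near point of order $j$ is a sequence $a_0\in M_0,\dots,a_j\in M_j$ where $M_i$ is the blowing-up of $M_{i-1}$ at $a_{i-1}$ and $a_i$ maps to $a_{i-1}$; the number of stages of $\pi$ is the maximal order of infinitely near points in $M$. $\mathcal R^k_{[l]}(\mathbb R^2)$ is the set of $f\in\mathcal R^k(\mathbb R^2)$ for which there is such a $\pi$ with at most $l$ stages such that $f\circ\pi$ is regular on $M$. *)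

theory Defs
  imports "HOL-Analysis.Analysis"
begin

definition poly2 :: "(real \<times> real \<Rightarrow> real) \<Rightarrow> bool" where
  "poly2 p \<longleftrightarrow> (\<exists>n::nat. \<exists>c :: nat \<Rightarrow> nat \<Rightarrow> real.
      \<forall>x y. p (x, y) = (\<Sum>i\<le>n. \<Sum>j\<le>n. c i j * x ^ i * y ^ j))"

definition zariski_closed :: "(real \<times> real) set \<Rightarrow> bool" where
  "zariski_closed Z \<longleftrightarrow> (\<exists>G. (\<forall>g\<in>G. poly2 g) \<and> Z = {x. \<forall>g\<in>G. g x = 0})"

definition zariski_open :: "(real \<times> real) set \<Rightarrow> bool" where
  "zariski_open U \<longleftrightarrow> zariski_closed (- U)"

definition rational_fun :: "(real \<times> real \<Rightarrow> real) \<Rightarrow> bool" where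
  "rational_fun f \<longleftrightarrow> (\<exists>p q U. poly2 p \<and> poly2 q \<and> zariski_open U \<and> U \<noteq> {} \<and>
      (\<forall>x\<in>U. q x \<noteq> 0 \<and> f x = p x / q x))"

definition R0 :: "(real \<times> real \<Rightarrow> real) set" where
  "R0 = {f. continuous_on UNIV f \<and> rational_fun f}"

definition regular_at :: "(real \<times> real \<Rightarrow> real) \<Rightarrow> real \<times> real \<Rightarrow> bool" where
  "regular_at f x \<longleftrightarrow> (\<exists>p q. poly2 p \<and> poly2 q \<and> q x \<noteq> 0 \<and>
      (\<forall>\<^sub>F y in nhds x. f y = p y / q y))"

definition dom_f :: "(real \<times> real \<Rightarrow> real) \<Rightarrow> (real \<times> real) set" where
  "dom_f f = {x. regular_at f x}"

definition pol_f :: "(real \<times> real \<Rightarrow> real) \<Rightarrow> (real \<times> real) set" where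
  "pol_f f = UNIV - dom_f f"

text \<open>The two standard affine charts of the blowing-up of R^2 at the point a;
  the exceptional divisor is u = 0 in the first chart and v = 0 in the second.\<close>
definition blow_chart1 :: "real \<times> real \<Rightarrow> real \<times> real \<Rightarrow> real \<times> real" where
  "blow_chart1 a w = (fst a + fst w, snd a + fst w * snd w)"

definition blow_chart2 :: "real \<times> real \<Rightarrow> real \<times> real \<Rightarrow> real \<times> real" where
  "blow_chart2 a w = (fst a + fst w * snd w, snd a + snd w)"

text \<open>A composition of blowings-up with at most one stage is the blowing-up of R^2
  at a finite set S of (distinct) points. f \<circ> \<pi> is regular on M iff f is regular off S
  and f \<circ> \<pi> is regular at every point of each exceptional divisor, checked in both charts.\<close>
definition R0_1 :: "(real \<times> real \<Rightarrow> real) set" where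
  "R0_1 = {f. f \<in> R0 \<and> (\<exists>S. finite S \<and> (\<forall>x. x \<notin> S \<longrightarrow> regular_at f x) \<and>
      (\<forall>a\<in>S. \<forall>t. regular_at (f \<circ> blow_chart1 a) (0, t) \<and>
                 regular_at (f \<circ> blow_chart2 a) (t, 0)))}"

definition partial_dir :: "real \<times> real \<Rightarrow> (real \<times> real \<Rightarrow> real) \<Rightarrow> real \<times> real \<Rightarrow> real" where
  "partial_dir v f x = frechet_derivative f (at x) v"

end

theory Submission imports Defs begin

definition ps :: "(nat\<Rightarrow>nat\<Rightarrow>real) \<Rightarrow> nat \<Rightarrow> real\<times>real \<Rightarrow> real" where
  "ps c n z = (\<Sum>i\<le>n. \<Sum>j\<le>n. c i j * fst z ^ i * snd z ^ j)"

lemma poly2_ps: "poly2 p \<longleftrightarrow> (\<exists>c n. p = ps c n)"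
  unfolding poly2_def ps_def by (auto simp: fun_eq_iff)

definition padc :: "(nat\<Rightarrow>nat\<Rightarrow>real) \<Rightarrow> nat \<Rightarrow> nat\<Rightarrow>nat\<Rightarrow>real" where
  "padc c n i j = (if i \<le> n \<and> j \<le> n then c i j else 0)"

lemma ps_pad: assumes "n \<le> N" shows "ps c n = ps (padc c n) N"
proof
  fix z
  have "(\<Sum>j\<le>N. padc c n i j * fst z ^ i * snd z ^ j) = (if i \<le> n then (\<Sum>j\<le>n. c i j * fst z ^ i * snd z ^ j) else 0)" for i
  proof -
    have "(\<Sum>j\<le>N. padc c n i j * fst z ^ i * snd z ^ j) = (\<Sum>j\<le>n. padc c n i j * fst z ^ i * snd z ^ j)"
      by (rule sum.mono_neutral_right) (use assms in \<open>auto simp: padc_def\<close>)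
    then show ?thesis by (auto simp: padc_def)
  qed
  then have "ps (padc c n) N z = (\<Sum>i\<le>N. if i \<le> n then (\<Sum>j\<le>n. c i j * fst z ^ i * snd z ^ j) else 0)"
    by (simp add: ps_def)
  also have "\<dots> = (\<Sum>i\<le>n. if i \<le> n then (\<Sum>j\<le>n. c i j * fst z ^ i * snd z ^ j) else 0)"
    by (rule sum.mono_neutral_right) (use assms in auto)
  finally show "ps c n z = ps (padc c n) N z" by (simp add: ps_def)
qed

lemma padc_zero: "i > n \<or> j > n \<Longrightarrow> padc c n i j = 0" by (auto simp: padc_def)

lemma ps_lin: "ps (\<lambda>i j. c i j - k * d i j) n z = ps c n z - k * ps d n z"
  by (simp add: ps_def sum_subtractf sum_distrib_left algebra_simps)

lemma ps_u0: "ps c n (0, t) = (\<Sum>j\<le>n. c 0 j * t ^ j)"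
  by (simp add: ps_def sum.atMost_shift)

lemma ps_shift: assumes "\<forall>j. c 0 j = 0" "\<forall>j. c (Suc n) j = 0"
  shows "ps c n (u,t) = u * ps (\<lambda>i j. c (Suc i) j) n (u,t)"
proof -
  have "ps c n (u,t) = (\<Sum>i\<le>Suc n. \<Sum>j\<le>n. c i j * u ^ i * t ^ j)"
    using assms by (simp add: ps_def)
  also have "\<dots> = (\<Sum>i\<le>n. \<Sum>j\<le>n. c (Suc i) j * u ^ Suc i * t ^ j)"
    using assms by (simp add: sum.atMost_shift lessThan_Suc_atMost)
  also have "\<dots> = u * ps (\<lambda>i j. c (Suc i) j) n (u,t)"
    by (simp add: ps_def sum_distrib_left algebra_simps)
  finally show ?thesis .
qed

lemma ps_deriv: "\<exists>p1 p2. continuous_on UNIV (ps c n) \<and> continuous_on UNIV p1 \<and> continuous_on UNIV p2 \<and>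
   (\<forall>z. (ps c n has_derivative (\<lambda>h. p1 z * fst h + p2 z * snd h)) (at z))"
proof (intro exI conjI allI)
  show "continuous_on UNIV (ps c n)" unfolding ps_def by (intro continuous_intros)
  show "continuous_on UNIV (\<lambda>z. \<Sum>i\<le>n. \<Sum>j\<le>n. c i j * (of_nat i * fst z ^ (i - 1)) * snd z ^ j)"
    by (intro continuous_intros)
  show "continuous_on UNIV (\<lambda>z. \<Sum>i\<le>n. \<Sum>j\<le>n. c i j * fst z ^ i * (of_nat j * snd z ^ (j - 1)))"
    by (intro continuous_intros)
  fix z
  show "(ps c n has_derivative (\<lambda>h. (\<Sum>i\<le>n. \<Sum>j\<le>n. c i j * (of_nat i * fst z ^ (i - 1)) * snd z ^ j) * fst h +
     (\<Sum>i\<le>n. \<Sum>j\<le>n. c i j * fst z ^ i * (of_nat j * snd z ^ (j - 1))) * snd h)) (at z)"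
    unfolding ps_def[abs_def]
    apply (auto intro!: derivative_eq_intros)
    apply (simp add: fun_eq_iff sum_distrib_left sum.distrib algebra_simps)
    done
qed

lemma regular_factor:
  assumes "regular_at (f \<circ> blow_chart1 a) (0,t0)"
  shows "\<exists>r q e. poly2 r \<and> poly2 q \<and> e > 0 \<and>
     (\<forall>w\<in>ball (0,t0) e. q w \<noteq> 0 \<and> f (blow_chart1 a w) = f a + fst w * r w / q w)"
proof -
  obtain p q where pq: "poly2 p" "poly2 q" "q (0,t0) \<noteq> 0"
    and ev: "\<forall>\<^sub>F y in nhds (0,t0). (f \<circ> blow_chart1 a) y = p y / q y"
    using assms unfolding regular_at_def by blast
  obtain cp n1 where p: "p = ps cp n1" using pq(1) poly2_ps by blast
  obtain cq n2 where q: "q = ps cq n2" using pq(2) poly2_ps by blast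
  have "continuous_on UNIV q" using ps_deriv q by blast
  then have "open {y. q y \<noteq> 0}" by (intro open_Collect_neq) (auto intro: continuous_intros)
  then have ev2: "\<forall>\<^sub>F y in nhds (0,t0). q y \<noteq> 0"
    using pq(3) eventually_nhds_in_open by fastforce
  have "\<forall>\<^sub>F y in nhds (0,t0). (f \<circ> blow_chart1 a) y = p y / q y \<and> q y \<noteq> 0"
    using ev ev2 by (rule eventually_conj)
  then obtain e where e: "e > 0" and eb: "\<And>y. dist y (0,t0) < e \<Longrightarrow> (f \<circ> blow_chart1 a) y = p y / q y \<and> q y \<noteq> 0"
    unfolding eventually_nhds_metric by blast
  define N where "N = n1 + n2"
  define c where "c = f a"
  define d where "d i j = padc cp n1 i j - c * padc cq n2 i j" for i j
  have pN: "p = ps (padc cp n1) N" using p ps_pad N_def by simp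
  have qN: "q = ps (padc cq n2) N" using q ps_pad N_def by simp
  have pq_d: "p w - c * q w = ps d N w" for w
    unfolding pN qN d_def by (simp add: ps_lin)
  have zero_on: "(\<Sum>j\<le>N. d 0 j * t ^ j) = 0" if "t \<in> ball t0 e" for t
  proof -
    have "dist (0,t) (0,t0) < e" using that by (simp add: dist_Pair_Pair dist_commute)
    from eb[OF this] have "f a = p (0,t) / q (0,t)" "q (0,t) \<noteq> 0"
      by (auto simp: blow_chart1_def)
    then have "p (0,t) - c * q (0,t) = 0" by (simp add: c_def field_simps)
    then show ?thesis using pq_d ps_u0 by metis
  qed
  have d0: "\<forall>j. d 0 j = 0"
  proof (rule ccontr)
    assume "\<not> (\<forall>j. d 0 j = 0)"
    then obtain k where k: "d 0 k \<noteq> 0" by blast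
    have "k \<le> N"
    proof (rule ccontr)
      assume "\<not> k \<le> N"
      then have "k > n1" "k > n2" unfolding N_def by auto
      then have "d 0 k = 0" unfolding d_def by (simp add: padc_zero)
      with k show False by simp
    qed
    have "finite {t. (\<Sum>j\<le>N. d 0 j * t ^ j) = 0}"
      using polyfun_roots_finite[of "\<lambda>j. d 0 j" k N] k \<open>k \<le> N\<close> by simp
    moreover have "ball t0 e \<subseteq> {t. (\<Sum>j\<le>N. d 0 j * t ^ j) = 0}" using zero_on by blast
    moreover have "infinite (ball t0 e)" using e finite_imp_not_open[of "ball t0 e"] by auto
    ultimately show False using finite_subset by blast
  qed
  have dN: "\<forall>j. d (Suc N) j = 0" unfolding d_def N_def by (simp add: padc_zero)
  define r where "r = ps (\<lambda>i j. d (Suc i) j) N"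
  have fac: "p w - c * q w = fst w * r w" for w
    using ps_shift[OF d0 dN, of "fst w" "snd w"] pq_d[of w] by (simp add: r_def)
  show ?thesis
  proof (intro exI conjI ballI)
    show "poly2 r" unfolding r_def poly2_ps by blast
    show "poly2 q" by fact
    show "e > 0" by fact
    fix w :: "real \<times> real" assume "w \<in> ball (0,t0) e"
    then have "dist w (0,t0) < e" by (simp add: dist_commute)
    from eb[OF this] have 1: "f (blow_chart1 a w) = p w / q w" and 2: "q w \<noteq> 0" by auto
    show "q w \<noteq> 0" by fact
    have "p w = c * q w + fst w * r w" using fac[of w] by simp
    then show "f (blow_chart1 a w) = f a + fst w * r w / q w"
      using 1 2 by (simp add: c_def field_simps)
  qed
qed

lemma comp_rule:
  assumes "\<forall>z. (r has_derivative (\<lambda>h. r1 z * fst h + r2 z * snd h)) (at z)"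
    "(g has_derivative g') (at x)"
  shows "((\<lambda>y. r (g y)) has_derivative (\<lambda>h. r1 (g x) * fst (g' h) + r2 (g x) * snd (g' h))) (at x)"
  using has_derivative_compose[OF assms(2) assms(1)[rule_format]] by (simp add: o_def)

lemma deriv_form:
  fixes r q :: "real\<times>real \<Rightarrow> real" and a :: "real \<times> real"
  assumes r: "\<forall>z. (r has_derivative (\<lambda>h. r1 z * fst h + r2 z * snd h)) (at z)"
    and q: "\<forall>z. (q has_derivative (\<lambda>h. q1 z * fst h + q2 z * snd h)) (at z)"
    and u: "u \<noteq> 0" and qw: "q (u,t) \<noteq> 0"
  shows "((\<lambda>y. f0 + (fst y - fst a) * (r (fst y - fst a, (snd y - snd a)/(fst y - fst a)) / q (fst y - fst a, (snd y - snd a)/(fst y - fst a)))) has_derivative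
   (\<lambda>h. fst h * (r (u,t)/q(u,t)) + u * fst h * ((r1 (u,t) * q (u,t) - r (u,t) * q1 (u,t))/(q (u,t))^2)
      + (snd h - t * fst h) * ((r2 (u,t) * q(u,t) - r(u,t)*q2(u,t))/(q(u,t))^2))) (at (fst a + u, snd a + u*t))"
proof -
  define x where "x = (fst a + u, snd a + u*t)"
  define \<psi> where "\<psi> y = (fst y - fst a, (snd y - snd a)/(fst y - fst a))" for y :: "real\<times>real"
  have px: "\<psi> x = (u,t)" using u by (simp add: \<psi>_def x_def)
  have d\<psi>: "(\<psi> has_derivative (\<lambda>h. (fst h, (snd h - t * fst h)/u))) (at x)"
    unfolding \<psi>_def
    apply (rule has_derivative_eq_rhs)
     apply (rule derivative_eq_intros refl | simp add: x_def u)+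
    using u by (auto simp: fun_eq_iff x_def field_simps power2_eq_square)
  have dr: "((\<lambda>y. r (\<psi> y)) has_derivative (\<lambda>h. r1 (u,t) * fst h + r2 (u,t) * ((snd h - t * fst h)/u))) (at x)"
    using comp_rule[OF r d\<psi>] px by simp
  have dq: "((\<lambda>y. q (\<psi> y)) has_derivative (\<lambda>h. q1 (u,t) * fst h + q2 (u,t) * ((snd h - t * fst h)/u))) (at x)"
    using comp_rule[OF q d\<psi>] px by simp
  have dH: "((\<lambda>y. r (\<psi> y) / q (\<psi> y)) has_derivative
      (\<lambda>h. ((r1 (u,t) * fst h + r2 (u,t) * ((snd h - t * fst h)/u)) * q (u,t) - r (u,t) * (q1 (u,t) * fst h + q2 (u,t) * ((snd h - t * fst h)/u))) / (q (u,t) * q (u,t)))) (at x)"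
    using has_derivative_divide'[OF dr dq] px qw by simp
  have dfst: "((\<lambda>y. fst y - fst a) has_derivative (\<lambda>h. fst h)) (at x)"
    by (auto intro!: derivative_eq_intros)
  have "((\<lambda>y. f0 + (fst y - fst a) * (r (\<psi> y) / q (\<psi> y))) has_derivative
     (\<lambda>h. 0 + ((fst x - fst a) * (((r1 (u,t) * fst h + r2 (u,t) * ((snd h - t * fst h)/u)) * q (u,t) - r (u,t) * (q1 (u,t) * fst h + q2 (u,t) * ((snd h - t * fst h)/u))) / (q (u,t) * q (u,t)))
        + fst h * (r (\<psi> x) / q (\<psi> x))))) (at x)"
    by (intro has_derivative_add has_derivative_const has_derivative_mult dfst dH)
  then show ?thesis
    unfolding x_def[symmetric] \<psi>_def[symmetric]
    apply (rule has_derivative_eq_rhs)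
    using u qw px by (auto simp: fun_eq_iff x_def field_simps power2_eq_square)
qed

lemma cont_bound:
  fixes g :: "real\<times>real \<Rightarrow> real"
  assumes "continuous_on S g" "compact S" shows "\<exists>M. \<forall>x\<in>S. \<bar>g x\<bar> \<le> M"
  using compact_imp_bounded[OF compact_continuous_image[OF assms(1,2)]] by (auto simp: bounded_iff)

lemma chart_local:
  assumes "regular_at (f \<circ> blow_chart1 a) (0,t0)"
  shows "\<exists>\<epsilon>>0. \<exists>K. \<forall>u t. u \<noteq> 0 \<and> \<bar>u\<bar> < \<epsilon> \<and> \<bar>t - t0\<bar> < \<epsilon> \<longrightarrow>
     (\<exists>D. (f has_derivative D) (at (blow_chart1 a (u,t))) \<and> (\<forall>h. \<bar>D h\<bar> \<le> K * norm h))"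
proof -
  obtain r q e where rq: "poly2 r" "poly2 q" "e > 0"
    and H: "\<forall>w\<in>ball (0,t0) e. q w \<noteq> 0 \<and> f (blow_chart1 a w) = f a + fst w * r w / q w"
    using regular_factor[OF assms] by blast
  obtain cr nr where "r = ps cr nr" using rq(1) poly2_ps by blast
  then obtain r1 r2 where r: "continuous_on UNIV r" "continuous_on UNIV r1" "continuous_on UNIV r2"
    "\<forall>z. (r has_derivative (\<lambda>h. r1 z * fst h + r2 z * snd h)) (at z)" using ps_deriv by blast
  obtain cq nq where "q = ps cq nq" using rq(2) poly2_ps by blast
  then obtain q1 q2 where q: "continuous_on UNIV q" "continuous_on UNIV q1" "continuous_on UNIV q2"
    "\<forall>z. (q has_derivative (\<lambda>h. q1 z * fst h + q2 z * snd h)) (at z)" using ps_deriv by blast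
  define C where "C = cball (0::real,t0) (e/2)"
  have cC: "compact C" by (simp add: C_def)
  have CB: "C \<subseteq> ball (0,t0) e" using rq(3) by (auto simp: C_def)
  have qC: "\<forall>w\<in>C. q w \<noteq> 0" using H CB by blast
  have cr': "continuous_on C r" "continuous_on C r1" "continuous_on C r2"
    using r continuous_on_subset by blast+
  have cq': "continuous_on C q" "continuous_on C q1" "continuous_on C q2"
    using q continuous_on_subset by blast+
  have "continuous_on C (\<lambda>w. r w / q w)"
    using cr' cq' qC by (intro continuous_intros) auto
  then obtain M1 where M1: "\<forall>w\<in>C. \<bar>r w / q w\<bar> \<le> M1" using cont_bound cC by blast
  have "continuous_on C (\<lambda>w. (r1 w * q w - r w * q1 w) / (q w)^2)"
    using cr' cq' qC by (intro continuous_intros) auto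
  then obtain M2 where M2: "\<forall>w\<in>C. \<bar>(r1 w * q w - r w * q1 w) / (q w)^2\<bar> \<le> M2" using cont_bound cC by blast
  have "continuous_on C (\<lambda>w. (r2 w * q w - r w * q2 w) / (q w)^2)"
    using cr' cq' qC by (intro continuous_intros) auto
  then obtain M3 where M3: "\<forall>w\<in>C. \<bar>(r2 w * q w - r w * q2 w) / (q w)^2\<bar> \<le> M3" using cont_bound cC by blast
  have c0: "(0,t0) \<in> C" using rq(3) by (simp add: C_def)
  have M0: "M1 \<ge> 0" "M2 \<ge> 0" "M3 \<ge> 0" using M1 M2 M3 c0 by (meson abs_ge_zero order_trans)+
  define \<epsilon> where "\<epsilon> = e/4"
  define K where "K = M1 + \<epsilon> * M2 + (1 + \<bar>t0\<bar> + \<epsilon>) * M3"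
  have eps: "\<epsilon> > 0" using rq(3) by (simp add: \<epsilon>_def)
  have "\<forall>u t. u \<noteq> 0 \<and> \<bar>u\<bar> < \<epsilon> \<and> \<bar>t - t0\<bar> < \<epsilon> \<longrightarrow>
     (\<exists>D. (f has_derivative D) (at (blow_chart1 a (u,t))) \<and> (\<forall>h. \<bar>D h\<bar> \<le> K * norm h))"
  proof (intro allI impI)
    fix u t assume ut: "u \<noteq> 0 \<and> \<bar>u\<bar> < \<epsilon> \<and> \<bar>t - t0\<bar> < \<epsilon>"
    have "dist (u,t) (0,t0) \<le> \<bar>u\<bar> + \<bar>t - t0\<bar>"
      using norm_Pair_le[of u "t - t0"] by (simp add: dist_norm)
    then have wC: "(u,t) \<in> C" using ut by (simp add: C_def \<epsilon>_def dist_commute)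
    define x where "x = blow_chart1 a (u,t)"
    have x: "x = (fst a + u, snd a + u*t)" by (simp add: x_def blow_chart1_def)
    define F where "F y = f a + (fst y - fst a) * (r (fst y - fst a, (snd y - snd a)/(fst y - fst a)) / q (fst y - fst a, (snd y - snd a)/(fst y - fst a)))" for y :: "real \<times> real"
    define D where "D h = fst h * (r (u,t)/q(u,t)) + u * fst h * ((r1 (u,t) * q (u,t) - r (u,t) * q1 (u,t))/(q (u,t))^2)
      + (snd h - t * fst h) * ((r2 (u,t) * q(u,t) - r(u,t)*q2(u,t))/(q(u,t))^2)" for h :: "real \<times> real"
    have dF: "(F has_derivative D) (at x)"
      unfolding F_def D_def[abs_def] x using deriv_form[OF r(4) q(4), of u t "f a" a] ut qC wC by auto
    define \<psi> where "\<psi> y = (fst y - fst a, (snd y - snd a)/(fst y - fst a))" for y :: "real\<times>real"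
    have "isCont \<psi> x" unfolding \<psi>_def using ut by (intro continuous_intros) (auto simp: x)
    moreover have "\<psi> x = (u,t)" using ut by (simp add: \<psi>_def x)
    ultimately have "(\<psi> \<longlongrightarrow> (u,t)) (nhds x)"
      using isCont_tendsto_compose[where g=\<psi> and l=x and f="\<lambda>y. y" and F="nhds x"] by (simp add: filterlim_ident)
    then have ev1: "\<forall>\<^sub>F y in nhds x. \<psi> y \<in> ball (0,t0) e"
      using wC CB by (intro topological_tendstoD) auto
    have "((\<lambda>y. fst y - fst a) \<longlongrightarrow> u) (nhds x)"
      by (rule tendsto_eq_intros refl filterlim_ident | simp add: x)+
    then have ev2: "\<forall>\<^sub>F y in nhds x. fst y - fst a \<noteq> 0"
      using ut by (intro tendsto_imp_eventually_ne) auto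
    obtain d where d: "d > 0" "\<And>y. dist y x < d \<Longrightarrow> \<psi> y \<in> ball (0,t0) e \<and> fst y - fst a \<noteq> 0"
      using eventually_conj[OF ev1 ev2] unfolding eventually_nhds_metric by blast
    have "F y = f y" if "dist y x < d" for y
    proof -
      from d(2)[OF that] have 1: "\<psi> y \<in> ball (0,t0) e" and 2: "fst y - fst a \<noteq> 0" by auto
      have "blow_chart1 a (\<psi> y) = y" using 2 by (simp add: blow_chart1_def \<psi>_def prod_eq_iff)
      moreover from H 1 have "f (blow_chart1 a (\<psi> y)) = f a + fst (\<psi> y) * r (\<psi> y) / q (\<psi> y)" by blast
      ultimately have "f y = f a + fst (\<psi> y) * r (\<psi> y) / q (\<psi> y)" by simp
      then show ?thesis by (simp add: F_def \<psi>_def)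
    qed
    then have "(f has_derivative D) (at x)"
      using has_derivative_transform_within[of F D x UNIV d f] dF d(1) by auto
    moreover have "\<bar>D h\<bar> \<le> K * norm h" for h
    proof -
      define n where "n = norm h"
      have h1: "\<bar>fst h\<bar> \<le> n" and h2: "\<bar>snd h\<bar> \<le> n" unfolding n_def
        using norm_fst_le[of "fst h" "snd h"] norm_snd_le[of "snd h" "fst h"] by auto
      have A1: "\<bar>fst h * (r (u,t)/q(u,t))\<bar> \<le> n * M1"
        unfolding abs_mult using h1 M1 wC by (intro mult_mono) auto
      have A2: "\<bar>u * fst h * ((r1 (u,t) * q (u,t) - r (u,t) * q1 (u,t))/(q (u,t))^2)\<bar> \<le> (\<epsilon> * n) * M2"
        unfolding abs_mult using h1 M2 wC ut by (intro mult_mono) auto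
      have tb: "\<bar>t\<bar> \<le> \<bar>t0\<bar> + \<epsilon>" using ut by linarith
      have "\<bar>snd h - t * fst h\<bar> \<le> \<bar>snd h\<bar> + \<bar>t\<bar> * \<bar>fst h\<bar>" by (simp add: abs_mult[symmetric] abs_triangle_ineq4)
      also have "\<dots> \<le> n + (\<bar>t0\<bar> + \<epsilon>) * n" using h1 h2 tb by (intro add_mono mult_mono) auto
      finally have "\<bar>snd h - t * fst h\<bar> \<le> (1 + \<bar>t0\<bar> + \<epsilon>) * n" by (simp add: algebra_simps)
      then have A3: "\<bar>(snd h - t * fst h) * ((r2 (u,t) * q(u,t) - r(u,t)*q2(u,t))/(q(u,t))^2)\<bar> \<le> ((1 + \<bar>t0\<bar> + \<epsilon>) * n) * M3"
        unfolding abs_mult using M3 wC by (intro mult_mono) auto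
      have "\<bar>D h\<bar> \<le> n * M1 + (\<epsilon> * n) * M2 + ((1 + \<bar>t0\<bar> + \<epsilon>) * n) * M3"
        unfolding D_def using A1 A2 A3 by linarith
      then show ?thesis by (simp add: K_def n_def algebra_simps)
    qed
    ultimately show "\<exists>D. (f has_derivative D) (at (blow_chart1 a (u,t))) \<and> (\<forall>h. \<bar>D h\<bar> \<le> K * norm h)"
      using x_def by blast
  qed
  then show ?thesis using eps by blast
qed

lemma chart_uniform:
  assumes "\<forall>t. regular_at (f \<circ> blow_chart1 a) (0,t)"
  shows "\<exists>\<delta>>0. \<exists>K. \<forall>u t. u \<noteq> 0 \<and> \<bar>u\<bar> < \<delta> \<and> \<bar>t\<bar> \<le> 1 \<longrightarrow>
     (\<exists>D. (f has_derivative D) (at (blow_chart1 a (u,t))) \<and> (\<forall>h. \<bar>D h\<bar> \<le> K * norm h))"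
proof -
  define P where "P t0 \<epsilon> K \<longleftrightarrow> (\<forall>u t. u \<noteq> 0 \<and> \<bar>u\<bar> < \<epsilon> \<and> \<bar>t - t0\<bar> < \<epsilon> \<longrightarrow>
     (\<exists>D. (f has_derivative D) (at (blow_chart1 a (u,t))) \<and> (\<forall>h. \<bar>D h\<bar> \<le> K * norm h)))" for t0 \<epsilon> K
  have "\<forall>t0. \<exists>p. fst p > 0 \<and> P t0 (fst p) (snd p)"
  proof
    fix t0
    from chart_local[of f a t0] assms obtain \<epsilon> K where "\<epsilon> > 0" "P t0 \<epsilon> K"
      unfolding P_def by blast
    then show "\<exists>p. fst p > 0 \<and> P t0 (fst p) (snd p)" by (intro exI[of _ "(\<epsilon>,K)"]) auto
  qed
  then obtain G where G: "\<And>t0. fst (G t0) > 0 \<and> P t0 (fst (G t0)) (snd (G t0))" by metis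
  define E where "E t0 = fst (G t0)" for t0
  define Kf where "Kf t0 = snd (G t0)" for t0
  have "compact {-1..1::real}" by simp
  moreover have "{-1..1::real} \<subseteq> (\<Union>c\<in>{-1..1}. ball c (E c))"
    using G by (force simp: E_def)
  ultimately obtain T where T: "T \<subseteq> {-1..1}" "finite T" "{-1..1::real} \<subseteq> (\<Union>c\<in>T. ball c (E c))"
    using compactE_image[where S="{-1..1::real}" and C="{-1..1::real}" and f="\<lambda>c. ball c (E c)"] by auto
  have Tne: "T \<noteq> {}" using T(3) by force
  define \<delta> where "\<delta> = Min (E ` T)"
  define K where "K = Max (Kf ` T)"
  have "\<delta> > 0" unfolding \<delta>_def using T(2) Tne G by (auto simp: E_def)
  moreover have "\<forall>u t. u \<noteq> 0 \<and> \<bar>u\<bar> < \<delta> \<and> \<bar>t\<bar> \<le> 1 \<longrightarrow>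
     (\<exists>D. (f has_derivative D) (at (blow_chart1 a (u,t))) \<and> (\<forall>h. \<bar>D h\<bar> \<le> K * norm h))"
  proof (intro allI impI)
    fix u t :: real assume ut: "u \<noteq> 0 \<and> \<bar>u\<bar> < \<delta> \<and> \<bar>t\<bar> \<le> 1"
    then have "t \<in> {-1..1}" by auto
    then obtain t0 where t0: "t0 \<in> T" "t \<in> ball t0 (E t0)" using T(3) by blast
    have "\<delta> \<le> E t0" unfolding \<delta>_def using T(2) t0(1) by simp
    then have "\<bar>u\<bar> < E t0" "\<bar>t - t0\<bar> < E t0" using ut t0(2) by (auto simp: dist_real_def)
    then obtain D where D: "(f has_derivative D) (at (blow_chart1 a (u,t)))" "\<forall>h. \<bar>D h\<bar> \<le> Kf t0 * norm h"
      using G[of t0] ut unfolding P_def E_def Kf_def by blast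
    have "Kf t0 \<le> K" unfolding K_def using T(2) t0(1) by simp
    then have "\<forall>h. \<bar>D h\<bar> \<le> K * norm h" using D(2) by (meson mult_right_mono norm_ge_zero order_trans)
    then show "\<exists>D. (f has_derivative D) (at (blow_chart1 a (u,t))) \<and> (\<forall>h. \<bar>D h\<bar> \<le> K * norm h)"
      using D(1) by blast
  qed
  ultimately show ?thesis by blast
qed

lemma sw_eq: "prod.swap = (\<lambda>y. (snd y, fst y))" by (auto simp: fun_eq_iff)

lemma ps_swap: "ps c n \<circ> prod.swap = ps (\<lambda>i j. c j i) n"
  by (auto simp: fun_eq_iff ps_def intro: sum.swap[THEN trans] sum.cong simp: mult_ac)

lemma poly2_swap: "poly2 p \<Longrightarrow> poly2 (p \<circ> prod.swap)"
  using ps_swap poly2_ps by metis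

lemma regular_swap:
  assumes "regular_at g w" shows "regular_at (g \<circ> prod.swap) (prod.swap w)"
proof -
  obtain p q where pq: "poly2 p" "poly2 q" "q w \<noteq> 0" and ev: "\<forall>\<^sub>F y in nhds w. g y = p y / q y"
    using assms unfolding regular_at_def by blast
  have lim: "filterlim prod.swap (nhds w) (nhds (prod.swap w))"
  proof -
    have "((\<lambda>y. (snd y, fst y)) \<longlongrightarrow> (snd (prod.swap w), fst (prod.swap w))) (nhds (prod.swap w))"
      by (intro tendsto_intros filterlim_ident)
    then show ?thesis by (simp add: sw_eq)
  qed
  have "\<forall>\<^sub>F y in nhds (prod.swap w). g (prod.swap y) = p (prod.swap y) / q (prod.swap y)"
    using lim ev unfolding filterlim_iff by blast
  then show ?thesis unfolding regular_at_def
    using pq poly2_swap by (intro exI[of _ "p \<circ> prod.swap"] exI[of _ "q \<circ> prod.swap"]) auto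
qed

lemma swap_deriv:
  assumes "((f \<circ> prod.swap) has_derivative D) (at (prod.swap x))"
  shows "(f has_derivative (\<lambda>h. D (prod.swap h))) (at x)"
proof -
  have s: "(prod.swap has_derivative prod.swap) (at x)"
  proof -
    have "((\<lambda>y. (snd y, fst y)) has_derivative (\<lambda>h. (snd h, fst h))) (at x)"
      by (intro derivative_intros)
    then show ?thesis by (simp add: sw_eq)
  qed
  from has_derivative_compose[OF s assms] show ?thesis by (simp add: o_def)
qed

lemma norm_swap2: "norm (prod.swap (h :: real \<times> real)) = norm h"
  by (cases h) (simp add: norm_Pair add.commute)

theorem proposition3p6:
  fixes f :: "real \<times> real \<Rightarrow> real" and v :: "real \<times> real"
  assumes "f \<in> R0_1"
  shows "\<forall>a\<in>pol_f f. \<exists>U. open U \<and> a \<in> U \<and>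
           (\<exists>B. \<forall>x\<in>U \<inter> dom_f f. \<bar>partial_dir v f x\<bar> \<le> B)"
proof
  fix a assume aP: "a \<in> pol_f f"
  then have nreg: "\<not> regular_at f a" by (simp add: pol_f_def dom_f_def)
  obtain S where S: "finite S" "\<forall>x. x \<notin> S \<longrightarrow> regular_at f x"
    "\<forall>a\<in>S. \<forall>t. regular_at (f \<circ> blow_chart1 a) (0, t) \<and> regular_at (f \<circ> blow_chart2 a) (t, 0)"
    using assms unfolding R0_1_def by blast
  have aS: "a \<in> S" using S(2) nreg by blast
  have c1: "\<forall>t. regular_at (f \<circ> blow_chart1 a) (0,t)" using S(3) aS by blast
  define f' where "f' = f \<circ> prod.swap"
  define a' where "a' = prod.swap a"
  have eqc: "f' \<circ> blow_chart1 a' = (f \<circ> blow_chart2 a) \<circ> prod.swap"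
    by (rule ext) (simp add: f'_def a'_def blow_chart1_def blow_chart2_def mult.commute)
  have c2: "\<forall>t. regular_at (f' \<circ> blow_chart1 a') (0,t)"
  proof
    fix t
    have "regular_at (f \<circ> blow_chart2 a) (t,0)" using S(3) aS by blast
    from regular_swap[OF this] show "regular_at (f' \<circ> blow_chart1 a') (0,t)" by (simp add: eqc)
  qed
  obtain \<delta>1 K1 where d1: "\<delta>1 > 0" "\<forall>u t. u \<noteq> 0 \<and> \<bar>u\<bar> < \<delta>1 \<and> \<bar>t\<bar> \<le> 1 \<longrightarrow>
     (\<exists>D. (f has_derivative D) (at (blow_chart1 a (u,t))) \<and> (\<forall>h. \<bar>D h\<bar> \<le> K1 * norm h))"
    using chart_uniform[OF c1] by blast
  obtain \<delta>2 K2 where d2: "\<delta>2 > 0" "\<forall>u t. u \<noteq> 0 \<and> \<bar>u\<bar> < \<delta>2 \<and> \<bar>t\<bar> \<le> 1 \<longrightarrow>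
     (\<exists>D. (f' has_derivative D) (at (blow_chart1 a' (u,t))) \<and> (\<forall>h. \<bar>D h\<bar> \<le> K2 * norm h))"
    using chart_uniform[OF c2] by blast
  define \<delta> where "\<delta> = min \<delta>1 \<delta>2"
  define K where "K = max K1 K2"
  show "\<exists>U. open U \<and> a \<in> U \<and> (\<exists>B. \<forall>x\<in>U \<inter> dom_f f. \<bar>partial_dir v f x\<bar> \<le> B)"
  proof (intro exI conjI ballI)
    show "open (ball a \<delta>)" by simp
    show "a \<in> ball a \<delta>" using d1 d2 by (simp add: \<delta>_def)
    fix x assume x: "x \<in> ball a \<delta> \<inter> dom_f f"
    then have xa: "x \<noteq> a" using aP by (auto simp: pol_f_def)
    define u where "u = fst x - fst a"
    define w where "w = snd x - snd a"
    have "(u, w) = x - a" by (simp add: u_def w_def prod_eq_iff)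
    then have "norm (u, w) < \<delta>" using x by (simp add: dist_norm norm_minus_commute)
    then have uw: "\<bar>u\<bar> < \<delta>" "\<bar>w\<bar> < \<delta>"
      using norm_fst_le[of u w] norm_snd_le[of w u] by auto
    have "\<exists>D. (f has_derivative D) (at x) \<and> (\<forall>h. \<bar>D h\<bar> \<le> K * norm h)"
    proof (cases "\<bar>w\<bar> \<le> \<bar>u\<bar>")
      case True
      then have u0: "u \<noteq> 0" using xa by (auto simp: u_def w_def prod_eq_iff)
      have t1: "\<bar>w / u\<bar> \<le> 1" proof -
        have "\<bar>w/u\<bar> = \<bar>w\<bar>/\<bar>u\<bar>" by (simp add: abs_divide)
        also have "\<dots> \<le> 1" using True u0 by (simp add: divide_le_eq_1)
        finally show ?thesis .
      qed
      have xe: "blow_chart1 a (u, w/u) = x" using u0 by (simp add: blow_chart1_def u_def w_def prod_eq_iff)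
      have "u \<noteq> 0 \<and> \<bar>u\<bar> < \<delta>1 \<and> \<bar>w/u\<bar> \<le> 1" using u0 uw t1 by (simp add: \<delta>_def)
      from d1(2)[rule_format, OF this] obtain D where D: "(f has_derivative D) (at x)" "\<forall>h. \<bar>D h\<bar> \<le> K1 * norm h"
        unfolding xe by blast
      have "\<bar>D h\<bar> \<le> K * norm h" for h
      proof -
        have "\<bar>D h\<bar> \<le> K1 * norm h" using D(2) by blast
        also have "\<dots> \<le> K * norm h" by (intro mult_right_mono) (auto simp: K_def)
        finally show ?thesis .
      qed
      then show ?thesis using D(1) by blast
    next
      case False
      then have w0: "w \<noteq> 0" by auto
      have t1: "\<bar>u / w\<bar> \<le> 1" proof -
        have "\<bar>u/w\<bar> = \<bar>u\<bar>/\<bar>w\<bar>" by (simp add: abs_divide)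
        also have "\<dots> \<le> 1" using False w0 by (simp add: divide_le_eq_1)
        finally show ?thesis .
      qed
      have xe: "blow_chart1 a' (w, u/w) = prod.swap x" using w0
        by (simp add: blow_chart1_def a'_def u_def w_def prod_eq_iff)
      have "w \<noteq> 0 \<and> \<bar>w\<bar> < \<delta>2 \<and> \<bar>u/w\<bar> \<le> 1" using w0 uw t1 by (simp add: \<delta>_def)
      from d2(2)[rule_format, OF this] obtain D where D: "(f' has_derivative D) (at (prod.swap x))" "\<forall>h. \<bar>D h\<bar> \<le> K2 * norm h"
        unfolding xe by blast
      have "(f has_derivative (\<lambda>h. D (prod.swap h))) (at x)"
        using swap_deriv D(1) by (simp add: f'_def)
      moreover have "\<bar>D (prod.swap h)\<bar> \<le> K * norm h" for h
      proof -
        have "\<bar>D (prod.swap h)\<bar> \<le> K2 * norm h" using D(2) norm_swap2[of h] by metis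
        also have "\<dots> \<le> K * norm h" by (intro mult_right_mono) (auto simp: K_def)
        finally show ?thesis .
      qed
      ultimately show ?thesis by blast
    qed
    then obtain D where D: "(f has_derivative D) (at x)" "\<forall>h. \<bar>D h\<bar> \<le> K * norm h" by blast
    have "partial_dir v f x = D v" unfolding partial_dir_def using frechet_derivative_at[OF D(1)] by simp
    moreover have "\<bar>D v\<bar> \<le> K * norm v" using D(2) by blast
    ultimately show "\<bar>partial_dir v f x\<bar> \<le> K * norm v" by simp
  qed
qed

end
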